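(* Let $I$ be a finite set and let $T$ be a tree on $I$. For any subset $J \subseteq I$ there exists a unique tree $T_J$ on the leaf set $J$ such that $T_J \sqcup |_{I\setminus J} \leq T$ in the poset $\operatorname{For}(I)$.
   Context: A tree on a finite set $I$ is a (non-planar) rooted binary tree whose leaves are bijectively labeled by $I$: its vertices are inner vertices (of valence $3$) and leaves and the root (of valence $1$), and edges are oriented towards the root; a tree consisting of a single leaf (no inner vertices) is allowed. A forest on $I$ is a set of trees whose leaf sets form a partition of $I$; $\sqcup$ denotes disjoint union of forests. For forests $F,G$ on $I$, we set $F \leq G$ if there is a continuous (topological) map from $F$ to $G$ which (D1) is increasing with respect to the orientation towards the root, (D2) maps inner vertices to inner vertices injectively, (D3) restricts to the identity of $I$ on leaves, and (D4) is injective on each tree of $F$. This defines a poset $\operatorname{For}(I)$. For $J \subseteq I$, $|_J$ denotes the forest on $J$ with no inner vertices (each element of $J$ is a one-leaf tree). *)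

theory Defs
  imports Main
begin

text \<open>A (non-planar, rooted, binary, leaf-labelled) tree on a finite set I is encoded by
its set of vertices below the root, each vertex being identified with the set of leaves
lying below it (its cluster): leaves are the singletons {i}, inner vertices are the
non-singleton clusters, the top cluster I is the vertex adjacent to the root, and every
inner vertex has exactly two children (a split of its cluster into two nonempty disjoint
clusters). This is the standard bijection between such trees and binary hierarchies.\<close>

definition is_tree :: "'a set \<Rightarrow> 'a set set \<Rightarrow> bool" where
  "is_tree I T \<longleftrightarrow>
     I \<in> T \<and>
     (\<forall>C\<in>T. C \<noteq> {} \<and> C \<subseteq> I) \<and>
     (\<forall>i\<in>I. {i} \<in> T) \<and>
     (\<forall>C\<in>T. \<forall>D\<in>T. C \<subseteq> D \<or> D \<subseteq> C \<or> C \<inter> D = {}) \<and>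
     (\<forall>C\<in>T. \<not> is_singleton C \<longrightarrow>
        (\<exists>A\<in>T. \<exists>B\<in>T. A \<noteq> {} \<and> B \<noteq> {} \<and> A \<inter> B = {} \<and> A \<union> B = C))"

definition leaves :: "'a set set \<Rightarrow> 'a set" where
  "leaves T = \<Union>T"

definition is_forest :: "'a set \<Rightarrow> 'a set set set \<Rightarrow> bool" where
  "is_forest I F \<longleftrightarrow>
     (\<forall>T\<in>F. is_tree (leaves T) T) \<and>
     (\<Union>T\<in>F. leaves T) = I \<and>
     (\<forall>T1\<in>F. \<forall>T2\<in>F. T1 \<noteq> T2 \<longrightarrow> leaves T1 \<inter> leaves T2 = {})"

definition trivial_forest :: "'a set \<Rightarrow> 'a set set set" where
  "trivial_forest J = (\<lambda>i. {{i}}) ` J"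

text \<open>A map F \<rightarrow> G satisfying (D1)-(D4) is determined by where it
sends vertices (edges are then sent to the unique increasing paths between the images of
their endpoints; roots go to any point above the image of the top vertex). Vertices of
different trees of a forest are distinct clusters, so the map is a function phi on
clusters. Conditions:
 - continuity: each (connected) tree of F maps into a single tree S of G;
 - (D1) increasing: A below C in T implies phi A below phi C;
 - (D2) inner vertices go to inner vertices, injectively;
 - (D3) identity on leaves;
 - (D4) injective on each tree: injective on its vertices, and the images of the two
   edges into an inner vertex C (from children A, B) are not mapped to overlapping paths,
   i.e. phi A and phi B lie in different branches below phi C.\<close>
definition forest_le :: "'a set \<Rightarrow> 'a set set set \<Rightarrow> 'a set set set \<Rightarrow> bool" where
  "forest_le I F G \<longleftrightarrow> is_forest I F \<and> is_forest I G \<and>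
    (\<exists>\<phi> :: 'a set \<Rightarrow> 'a set.
       (\<forall>T\<in>F. \<exists>S\<in>G. \<forall>C\<in>T. \<phi> C \<in> S) \<and>
       (\<forall>T\<in>F. \<forall>A\<in>T. \<forall>C\<in>T. A \<subseteq> C \<longrightarrow> \<phi> A \<subseteq> \<phi> C) \<and>
       (\<forall>C\<in>\<Union>F. \<not> is_singleton C \<longrightarrow> \<not> is_singleton (\<phi> C)) \<and>
       inj_on \<phi> {C\<in>\<Union>F. \<not> is_singleton C} \<and>
       (\<forall>C\<in>\<Union>F. is_singleton C \<longrightarrow> \<phi> C = C) \<and>
       (\<forall>T\<in>F. inj_on \<phi> T) \<and>
       (\<forall>T\<in>F. \<forall>A\<in>T. \<forall>B\<in>T. \<forall>C\<in>T.
          A \<noteq> {} \<and> B \<noteq> {} \<and> A \<inter> B = {} \<and> A \<union> B = C \<longrightarrow>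
          \<not> (\<exists>D\<in>\<Union>G. D \<subset> \<phi> C \<and> \<phi> A \<subseteq> D \<and> \<phi> B \<subseteq> D)))"

end

theory Submission
  imports Defs
begin

definition lca :: "'a set set \<Rightarrow> 'a set \<Rightarrow> 'a set" where
  "lca T D = \<Inter>{C\<in>T. D \<subseteq> C}"

definition restr :: "'a set \<Rightarrow> 'a set set \<Rightarrow> 'a set set" where
  "restr J T = {C \<inter> J | C. C \<in> T \<and> C \<inter> J \<noteq> {}}"

lemma chain_Inter_in:
  assumes "finite S" "S \<noteq> {}" "\<forall>X\<in>S. \<forall>Y\<in>S. X \<subseteq> Y \<or> Y \<subseteq> X"
  shows "\<Inter>S \<in> S"
  using assms
proof (induction S rule: finite_ne_induct)
  case (singleton x) then show ?case by simp
next
  case (insert x F)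
  then have "\<Inter>F \<in> F" by blast
  with insert.prems have "x \<subseteq> \<Inter>F \<or> \<Inter>F \<subseteq> x" by blast
  then show ?case
  proof
    assume "x \<subseteq> \<Inter>F"
    then have "\<Inter>(insert x F) = x" by auto
    then show ?thesis by simp
  next
    assume "\<Inter>F \<subseteq> x"
    then have "\<Inter>(insert x F) = \<Inter>F" by auto
    then show ?thesis using \<open>\<Inter>F \<in> F\<close> by simp
  qed
qed

lemma tree_sub: "is_tree I T \<Longrightarrow> C \<in> T \<Longrightarrow> C \<subseteq> I \<and> C \<noteq> {}"
  by (simp add: is_tree_def)

lemma tree_lam: "is_tree I T \<Longrightarrow> C \<in> T \<Longrightarrow> D \<in> T \<Longrightarrow> C \<subseteq> D \<or> D \<subseteq> C \<or> C \<inter> D = {}"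
  by (simp add: is_tree_def)

lemma tree_top: "is_tree I T \<Longrightarrow> I \<in> T"
  by (simp add: is_tree_def)

lemma tree_leaf: "is_tree I T \<Longrightarrow> i \<in> I \<Longrightarrow> {i} \<in> T"
  by (simp add: is_tree_def)

lemma tree_split:
  assumes "is_tree I T" "C \<in> T" "\<not> is_singleton C"
  shows "\<exists>A\<in>T. \<exists>B\<in>T. A \<noteq> {} \<and> B \<noteq> {} \<and> A \<inter> B = {} \<and> A \<union> B = C"
proof -
  have "\<forall>C\<in>T. \<not> is_singleton C \<longrightarrow>
        (\<exists>A\<in>T. \<exists>B\<in>T. A \<noteq> {} \<and> B \<noteq> {} \<and> A \<inter> B = {} \<and> A \<union> B = C)"
    using assms(1) unfolding is_tree_def by (elim conjE) assumption
  then show ?thesis using assms(2,3) by blast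
qed

lemma lca_in:
  assumes "finite I" "is_tree I T" "D \<noteq> {}" "D \<subseteq> I"
  shows "lca T D \<in> T"
proof -
  have fT: "finite T" using assms(1) tree_sub[OF assms(2)]
    by (metis PowI finite_Pow_iff finite_subset subsetI)
  let ?S = "{C\<in>T. D \<subseteq> C}"
  have "\<Inter>?S \<in> ?S"
  proof (rule chain_Inter_in)
    show "finite ?S" using fT by simp
    show "?S \<noteq> {}" using tree_top[OF assms(2)] assms(4) by blast
    show "\<forall>X\<in>?S. \<forall>Y\<in>?S. X \<subseteq> Y \<or> Y \<subseteq> X"
      using tree_lam[OF assms(2)] assms(3) by blast
  qed
  then show ?thesis unfolding lca_def by blast
qed

lemma lca_sup: "D \<subseteq> lca T D"
  unfolding lca_def by blast

lemma lca_min: "C \<in> T \<Longrightarrow> D \<subseteq> C \<Longrightarrow> lca T D \<subseteq> C"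
  unfolding lca_def by blast

lemma lca_mono: "A \<subseteq> C \<Longrightarrow> lca T A \<subseteq> lca T C"
  unfolding lca_def by (rule Inf_superset_mono) blast

lemma lca_single: "{x} \<in> T \<Longrightarrow> lca T {x} = {x}"
  using lca_sup[of "{x}" T] lca_min[of "{x}" T "{x}"] by blast

lemma nonsingleton_two: "C \<noteq> {} \<Longrightarrow> \<not> is_singleton C \<Longrightarrow> \<exists>a\<in>C. \<exists>b\<in>C. a \<noteq> b"
  unfolding is_singleton_def by blast

lemma restr_lca:
  assumes "finite I" "is_tree I T" "J \<subseteq> I" "X \<in> restr J T"
  shows "lca T X \<inter> J = X"
proof -
  obtain C where C: "C \<in> T" "X = C \<inter> J" "C \<inter> J \<noteq> {}" using assms(4) unfolding restr_def by blast
  have "lca T X \<subseteq> C" using lca_min[OF C(1)] C(2) by blast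
  moreover have "X \<subseteq> lca T X" by (rule lca_sup)
  ultimately show ?thesis using C(2) by (auto simp: Int_commute)
qed

lemma restr_tree:
  assumes "finite I" "is_tree I T" "J \<subseteq> I" "J \<noteq> {}"
  shows "is_tree J (restr J T)"
  unfolding is_tree_def
proof (intro conjI ballI impI)
  show "J \<in> restr J T" unfolding restr_def using tree_top[OF assms(2)] assms(3,4) by blast
next
  fix C assume "C \<in> restr J T" then show "C \<noteq> {}" unfolding restr_def by blast
next
  fix C assume "C \<in> restr J T" then show "C \<subseteq> J" unfolding restr_def by blast
next
  fix i assume "i \<in> J" then show "{i} \<in> restr J T" unfolding restr_def
    using tree_leaf[OF assms(2), of i] assms(3) by blast
next
  fix C D assume "C \<in> restr J T" "D \<in> restr J T"
  then obtain C' D' where "C' \<in> T" "D' \<in> T" "C = C' \<inter> J" "D = D' \<inter> J" unfolding restr_def by blast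
  then show "C \<subseteq> D \<or> D \<subseteq> C \<or> C \<inter> D = {}" using tree_lam[OF assms(2), of C' D'] by blast
next
  fix X assume X: "X \<in> restr J T" "\<not> is_singleton X"
  obtain C where C: "C \<in> T" "X = C \<inter> J" "C \<inter> J \<noteq> {}" using X(1) unfolding restr_def by blast
  have XI: "X \<subseteq> I" "X \<noteq> {}" using C assms(3) by auto
  define M where "M = lca T X"
  have MT: "M \<in> T" unfolding M_def by (rule lca_in[OF assms(1,2) XI(2,1)])
  have MJ: "M \<inter> J = X" unfolding M_def by (rule restr_lca[OF assms(1,2,3) X(1)])
  obtain a b where ab: "a \<in> X" "b \<in> X" "a \<noteq> b" using nonsingleton_two[OF XI(2) X(2)] by blast
  have "\<not> is_singleton M" using MJ ab unfolding is_singleton_def by blast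
  then obtain A B where AB: "A \<in> T" "B \<in> T" "A \<noteq> {}" "B \<noteq> {}" "A \<inter> B = {}" "A \<union> B = M"
    using tree_split[OF assms(2) MT] by blast
  have minM: "\<And>D. D \<in> T \<Longrightarrow> X \<subseteq> D \<Longrightarrow> M \<subseteq> D" unfolding M_def by (rule lca_min)
  have "A \<inter> J \<noteq> {}"
  proof
    assume "A \<inter> J = {}"
    then have "X \<subseteq> B" using MJ AB(6) by blast
    then have "M \<subseteq> B" using minM AB(2) by blast
    then show False using AB by blast
  qed
  moreover have "B \<inter> J \<noteq> {}"
  proof
    assume "B \<inter> J = {}"
    then have "X \<subseteq> A" using MJ AB(6) by blast
    then have "M \<subseteq> A" using minM AB(1) by blast
    then show False using AB by blast
  qed
  ultimately have R: "A \<inter> J \<in> restr J T" "B \<inter> J \<in> restr J T" "A \<inter> J \<noteq> {}" "B \<inter> J \<noteq> {}"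
    unfolding restr_def using AB(1,2) by blast+
  have R2: "(A \<inter> J) \<inter> (B \<inter> J) = {}" "(A \<inter> J) \<union> (B \<inter> J) = X" using AB(5,6) MJ by blast+
  show "\<exists>A\<in>restr J T. \<exists>B\<in>restr J T. A \<noteq> {} \<and> B \<noteq> {} \<and> A \<inter> B = {} \<and> A \<union> B = X"
    apply (rule bexI[where x="A \<inter> J"])
     apply (rule bexI[where x="B \<inter> J"])
    using R R2 by simp_all
qed

lemma leaves_tree: "is_tree I T \<Longrightarrow> leaves T = I"
  unfolding leaves_def using tree_top[of I T] tree_sub[of I T] by blast

lemma single_tree: "is_tree {i} {{i}}"
  unfolding is_tree_def is_singleton_def by auto

lemma forest_T: "is_tree I T \<Longrightarrow> is_forest I {T}"
  unfolding is_forest_def using leaves_tree[of I T] by auto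

lemma forest_F:
  assumes "is_tree J TJ" "J \<subseteq> I" "J \<noteq> {}"
  shows "is_forest I (insert TJ (trivial_forest (I - J)))"
  unfolding is_forest_def
proof (intro conjI ballI impI)
  fix T' assume "T' \<in> insert TJ (trivial_forest (I - J))"
  then show "is_tree (leaves T') T'" using assms(1) leaves_tree[OF assms(1)]
    unfolding trivial_forest_def using single_tree by (auto simp: leaves_def)
next
  have "leaves ` trivial_forest (I - J) = (\<lambda>i. {i}) ` (I - J)"
    unfolding trivial_forest_def leaves_def by (auto simp: image_image)
  then show "(\<Union>T\<in>insert TJ (trivial_forest (I - J)). leaves T) = I"
    using leaves_tree[OF assms(1)] assms(2) by auto
next
  fix T1 T2 assume "T1 \<in> insert TJ (trivial_forest (I - J))" "T2 \<in> insert TJ (trivial_forest (I - J))" "T1 \<noteq> T2"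
  then show "leaves T1 \<inter> leaves T2 = {}"
    using leaves_tree[OF assms(1)] unfolding trivial_forest_def leaves_def by auto
qed

lemma exists_le:
  assumes fin: "finite I" and tr: "is_tree I T" and JI: "J \<subseteq> I" and Jne: "J \<noteq> {}"
  shows "forest_le I (insert (restr J T) (trivial_forest (I - J))) {T}"
proof -
  let ?TJ = "restr J T"
  let ?F = "insert ?TJ (trivial_forest (I - J))"
  have trJ: "is_tree J ?TJ" by (rule restr_tree[OF assms])
  have UF: "\<Union>?F = ?TJ \<union> (\<lambda>i. {i}) ` (I - J)" unfolding trivial_forest_def by auto
  have inTJ: "lca T C \<in> T" if "C \<in> ?TJ" for C
    using lca_in[OF fin tr] that tree_sub[OF trJ that] JI by blast
  have injTJ: "inj_on (lca T) ?TJ"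
    by (rule inj_onI) (metis restr_lca[OF fin tr JI])
  have P1: "\<forall>T'\<in>?F. \<exists>S\<in>{T}. \<forall>C\<in>T'. lca T C \<in> S"
  proof -
    have "\<forall>i\<in>I. lca T {i} \<in> T" using lca_single[of _ T] tree_leaf[OF tr] by simp
    then show ?thesis unfolding trivial_forest_def using inTJ by auto
  qed
  have P2: "\<forall>T'\<in>?F. \<forall>A\<in>T'. \<forall>C\<in>T'. A \<subseteq> C \<longrightarrow> lca T A \<subseteq> lca T C"
    using lca_mono by blast
  have P3: "\<forall>C\<in>\<Union>?F. \<not> is_singleton C \<longrightarrow> \<not> is_singleton (lca T C)"
  proof (intro ballI impI)
    fix C assume C: "C \<in> \<Union>?F" "\<not> is_singleton C"
    then have "C \<in> ?TJ" unfolding UF by auto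
    then have "C \<noteq> {}" using tree_sub[OF trJ] by blast
    then obtain a b where ab: "a \<in> C" "b \<in> C" "a \<noteq> b" using nonsingleton_two[OF _ C(2)] by blast
    show "\<not> is_singleton (lca T C)"
    proof
      assume "is_singleton (lca T C)"
      then obtain x where "lca T C = {x}" by (auto simp: is_singleton_def)
      then show False using lca_sup[of C T] ab by auto
    qed
  qed
  have P4: "inj_on (lca T) {C\<in>\<Union>?F. \<not> is_singleton C}"
  proof (rule inj_on_subset[OF injTJ])
    show "{C\<in>\<Union>?F. \<not> is_singleton C} \<subseteq> ?TJ" unfolding UF by auto
  qed
  have P5: "\<forall>C\<in>\<Union>?F. is_singleton C \<longrightarrow> lca T C = C"
  proof (intro ballI impI)
    fix C assume C: "C \<in> \<Union>?F" "is_singleton C"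
    then obtain x where x: "C = {x}" unfolding is_singleton_def by blast
    have "x \<in> I" using C(1) x tree_sub[OF trJ] JI unfolding UF by auto
    then show "lca T C = C" using x lca_single[OF tree_leaf[OF tr]] by simp
  qed
  have P6: "\<forall>T'\<in>?F. inj_on (lca T) T'"
    using injTJ unfolding trivial_forest_def by auto
  have P7: "\<forall>T'\<in>?F. \<forall>A\<in>T'. \<forall>B\<in>T'. \<forall>C\<in>T'.
          A \<noteq> {} \<and> B \<noteq> {} \<and> A \<inter> B = {} \<and> A \<union> B = C \<longrightarrow>
          \<not> (\<exists>D\<in>\<Union>{T}. D \<subset> lca T C \<and> lca T A \<subseteq> D \<and> lca T B \<subseteq> D)"
  proof (intro ballI impI notI)
    fix T' A B C assume T': "T' \<in> ?F" "A \<in> T'" "B \<in> T'" "C \<in> T'"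
      and ABC: "A \<noteq> {} \<and> B \<noteq> {} \<and> A \<inter> B = {} \<and> A \<union> B = C"
      and ex: "\<exists>D\<in>\<Union>{T}. D \<subset> lca T C \<and> lca T A \<subseteq> D \<and> lca T B \<subseteq> D"
    then obtain D where D: "D \<in> T" "D \<subset> lca T C" "lca T A \<subseteq> D" "lca T B \<subseteq> D" by auto
    have "C \<subseteq> D" using D(3,4) lca_sup[of A T] lca_sup[of B T] ABC by blast
    then have "lca T C \<subseteq> D" using lca_min D(1) by blast
    then show False using D(2) by blast
  qed
  show ?thesis unfolding forest_le_def
    apply (rule conjI, rule forest_F[OF trJ JI Jne])
    apply (rule conjI, rule forest_T[OF tr])
    apply (rule exI[where x="lca T"])
    apply (rule conjI, fact P1)
    apply (rule conjI, fact P2)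
    apply (rule conjI, fact P3)
    apply (rule conjI, fact P4)
    apply (rule conjI, fact P5)
    apply (rule conjI, fact P6)
    apply (fact P7)
    done
qed

lemma uniq:
  assumes fin: "finite I" and tr: "is_tree I T" and JI: "J \<subseteq> I" and Jne: "J \<noteq> {}"
    and trJ: "is_tree J T'"
    and le: "forest_le I (insert T' (trivial_forest (I - J))) {T}"
  shows "T' = restr J T"
proof -
  let ?F = "insert T' (trivial_forest (I - J))"
  have exP: "\<exists>\<phi> :: 'a set \<Rightarrow> 'a set. (\<forall>X\<in>?F. \<exists>S\<in>{T}. \<forall>C\<in>X. \<phi> C \<in> S) \<and>
       (\<forall>X\<in>?F. \<forall>A\<in>X. \<forall>C\<in>X. A \<subseteq> C \<longrightarrow> \<phi> A \<subseteq> \<phi> C) \<and>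
       (\<forall>C\<in>\<Union>?F. \<not> is_singleton C \<longrightarrow> \<not> is_singleton (\<phi> C)) \<and>
       inj_on \<phi> {C\<in>\<Union>?F. \<not> is_singleton C} \<and>
       (\<forall>C\<in>\<Union>?F. is_singleton C \<longrightarrow> \<phi> C = C) \<and>
       (\<forall>X\<in>?F. inj_on \<phi> X) \<and>
       (\<forall>X\<in>?F. \<forall>A\<in>X. \<forall>B\<in>X. \<forall>C\<in>X.
          A \<noteq> {} \<and> B \<noteq> {} \<and> A \<inter> B = {} \<and> A \<union> B = C \<longrightarrow>
          \<not> (\<exists>D\<in>\<Union>{T}. D \<subset> \<phi> C \<and> \<phi> A \<subseteq> D \<and> \<phi> B \<subseteq> D))"
    using le unfolding forest_le_def by (elim conjE) assumption
  define \<psi> where "\<psi> = (SOME \<phi> :: 'a set \<Rightarrow> 'a set. (\<forall>X\<in>?F. \<exists>S\<in>{T}. \<forall>C\<in>X. \<phi> C \<in> S) \<and>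
       (\<forall>X\<in>?F. \<forall>A\<in>X. \<forall>C\<in>X. A \<subseteq> C \<longrightarrow> \<phi> A \<subseteq> \<phi> C) \<and>
       (\<forall>C\<in>\<Union>?F. \<not> is_singleton C \<longrightarrow> \<not> is_singleton (\<phi> C)) \<and>
       inj_on \<phi> {C\<in>\<Union>?F. \<not> is_singleton C} \<and>
       (\<forall>C\<in>\<Union>?F. is_singleton C \<longrightarrow> \<phi> C = C) \<and>
       (\<forall>X\<in>?F. inj_on \<phi> X) \<and>
       (\<forall>X\<in>?F. \<forall>A\<in>X. \<forall>B\<in>X. \<forall>C\<in>X.
          A \<noteq> {} \<and> B \<noteq> {} \<and> A \<inter> B = {} \<and> A \<union> B = C \<longrightarrow>
          \<not> (\<exists>D\<in>\<Union>{T}. D \<subset> \<phi> C \<and> \<phi> A \<subseteq> D \<and> \<phi> B \<subseteq> D)))"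
  have c: "(\<forall>X\<in>?F. \<exists>S\<in>{T}. \<forall>C\<in>X. \<psi> C \<in> S) \<and>
       (\<forall>X\<in>?F. \<forall>A\<in>X. \<forall>C\<in>X. A \<subseteq> C \<longrightarrow> \<psi> A \<subseteq> \<psi> C) \<and>
       (\<forall>C\<in>\<Union>?F. \<not> is_singleton C \<longrightarrow> \<not> is_singleton (\<psi> C)) \<and>
       inj_on \<psi> {C\<in>\<Union>?F. \<not> is_singleton C} \<and>
       (\<forall>C\<in>\<Union>?F. is_singleton C \<longrightarrow> \<psi> C = C) \<and>
       (\<forall>X\<in>?F. inj_on \<psi> X) \<and>
       (\<forall>X\<in>?F. \<forall>A\<in>X. \<forall>B\<in>X. \<forall>C\<in>X.
          A \<noteq> {} \<and> B \<noteq> {} \<and> A \<inter> B = {} \<and> A \<union> B = C \<longrightarrow>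
          \<not> (\<exists>D\<in>\<Union>{T}. D \<subset> \<psi> C \<and> \<psi> A \<subseteq> D \<and> \<psi> B \<subseteq> D))"
    unfolding \<psi>_def by (rule someI_ex[OF exP])
  note c1 = c[THEN conjunct1]
  note c2 = c[THEN conjunct2, THEN conjunct1]
  note c5 = c[THEN conjunct2, THEN conjunct2, THEN conjunct2, THEN conjunct2, THEN conjunct1]
  note c6 = c[THEN conjunct2, THEN conjunct2, THEN conjunct2, THEN conjunct2, THEN conjunct2, THEN conjunct1]
  note c7 = c[THEN conjunct2, THEN conjunct2, THEN conjunct2, THEN conjunct2, THEN conjunct2, THEN conjunct2]
  have Q1: "\<And>C. C \<in> T' \<Longrightarrow> \<psi> C \<in> T" using c1 by auto
  have Q2: "\<And>A C. A \<in> T' \<Longrightarrow> C \<in> T' \<Longrightarrow> A \<subseteq> C \<Longrightarrow> \<psi> A \<subseteq> \<psi> C" using bspec[OF c2 insertI1] by blast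
  have Q5: "\<And>x. x \<in> J \<Longrightarrow> \<psi> {x} = {x}"
  proof -
    fix x assume "x \<in> J"
    then have "{x} \<in> \<Union>?F" using tree_leaf[OF trJ] by blast
    then show "\<psi> {x} = {x}" using c5 by (simp add: is_singleton_def)
  qed
  have Q6: "inj_on \<psi> T'" using bspec[OF c6 insertI1] .
  have Q7: "\<And>A B C D. A \<in> T' \<Longrightarrow> B \<in> T' \<Longrightarrow> C \<in> T' \<Longrightarrow> A \<noteq> {} \<Longrightarrow> B \<noteq> {} \<Longrightarrow>
      A \<inter> B = {} \<Longrightarrow> A \<union> B = C \<Longrightarrow> D \<in> T \<Longrightarrow> D \<subset> \<psi> C \<Longrightarrow> \<psi> A \<subseteq> D \<Longrightarrow> \<psi> B \<subseteq> D \<Longrightarrow> False"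
  proof -
    fix A B C D assume h: "A \<in> T'" "B \<in> T'" "C \<in> T'" "A \<noteq> {}" "B \<noteq> {}"
      "A \<inter> B = {}" "A \<union> B = C" "D \<in> T" "D \<subset> \<psi> C" "\<psi> A \<subseteq> D" "\<psi> B \<subseteq> D"
    have "\<forall>A\<in>T'. \<forall>B\<in>T'. \<forall>C\<in>T'.
          A \<noteq> {} \<and> B \<noteq> {} \<and> A \<inter> B = {} \<and> A \<union> B = C \<longrightarrow>
          \<not> (\<exists>D\<in>\<Union>{T}. D \<subset> \<psi> C \<and> \<psi> A \<subseteq> D \<and> \<psi> B \<subseteq> D)" using bspec[OF c7 insertI1] .
    then have "\<not> (\<exists>D\<in>T. D \<subset> \<psi> C \<and> \<psi> A \<subseteq> D \<and> \<psi> B \<subseteq> D)" using h(1-7) by simp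
    then show False using h(8-11) by blast
  qed
  have finJ: "finite J" using fin JI by (rule finite_subset[rotated])
  have sub: "\<And>x D. D \<in> T' \<Longrightarrow> x \<in> D \<Longrightarrow> x \<in> \<psi> D"
  proof -
    fix x D assume h: "D \<in> T'" "x \<in> D"
    then have xJ: "x \<in> J" using tree_sub[OF trJ] by blast
    have "\<psi> {x} \<subseteq> \<psi> D" using Q2[OF tree_leaf[OF trJ xJ] h(1)] h(2) by blast
    then show "x \<in> \<psi> D" using Q5[OF xJ] by blast
  qed
  have part1: "\<psi> D \<inter> J = D" if DT: "D \<in> T'" for D
  proof (rule ccontr)
    assume "\<psi> D \<inter> J \<noteq> D"
    moreover have "D \<subseteq> \<psi> D \<inter> J" using sub[OF DT] tree_sub[OF trJ DT] by blast
    ultimately obtain j where j: "j \<in> \<psi> D" "j \<in> J" "j \<notin> D" by blast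
    have Dne: "D \<noteq> {}" "D \<subseteq> J" using tree_sub[OF trJ DT] by auto
    define E where "E = lca T' (insert j D)"
    have ET: "E \<in> T'" unfolding E_def by (rule lca_in[OF finJ trJ]) (use j(2) Dne in auto)
    have DE: "insert j D \<subseteq> E" unfolding E_def by (rule lca_sup)
    have minE: "\<And>X. X \<in> T' \<Longrightarrow> insert j D \<subseteq> X \<Longrightarrow> E \<subseteq> X" unfolding E_def by (rule lca_min)
    obtain d where "d \<in> D" using Dne by blast
    have "\<not> is_singleton E"
    proof
      assume "is_singleton E"
      then obtain x where "E = {x}" by (auto simp: is_singleton_def)
      then show False using DE j(3) \<open>d \<in> D\<close> by auto
    qed
    then obtain A B where AB: "A \<in> T'" "B \<in> T'" "A \<noteq> {}" "B \<noteq> {}" "A \<inter> B = {}" "A \<union> B = E"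
      using tree_split[OF trJ ET] by blast
    have key: False if h: "A \<in> T'" "B \<in> T'" "A \<noteq> {}" "B \<noteq> {}" "A \<inter> B = {}" "A \<union> B = E" "j \<in> B" for A B
    proof -
      have jA: "j \<notin> A" using h by blast
      have "\<not> insert j D \<subseteq> B"
      proof
        assume "insert j D \<subseteq> B"
        then have "E \<subseteq> B" using minE h(2) by blast
        then show False using h by blast
      qed
      then have nDB: "\<not> D \<subseteq> B" using h(7) by blast
      have DA: "D \<subseteq> A"
      proof -
        have l1: "D \<subseteq> A \<or> A \<subseteq> D \<or> D \<inter> A = {}" using tree_lam[OF trJ DT h(1)] .
        have l2: "D \<subseteq> B \<or> B \<subseteq> D \<or> D \<inter> B = {}" using tree_lam[OF trJ DT h(2)] .
        show ?thesis using l1 l2 nDB h(3-7) DE j(3) by blast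
      qed
      have "j \<in> \<psi> A" using Q2[OF DT h(1) DA] j(1) by blast
      moreover have "j \<in> \<psi> B" using sub[OF h(2) h(7)] .
      moreover have "\<psi> A \<subseteq> \<psi> B \<or> \<psi> B \<subseteq> \<psi> A \<or> \<psi> A \<inter> \<psi> B = {}"
        using tree_lam[OF tr Q1[OF h(1)] Q1[OF h(2)]] .
      ultimately have X: "\<psi> A \<union> \<psi> B \<in> T" using Q1[OF h(1)] Q1[OF h(2)]
        by (metis Un_absorb1 Un_absorb2 disjoint_iff)
      have AE: "A \<subseteq> E" "B \<subseteq> E" using h by auto
      have XE: "\<psi> A \<union> \<psi> B \<subseteq> \<psi> E" using Q2[OF h(1) ET AE(1)] Q2[OF h(2) ET AE(2)] by blast
      have "A \<noteq> E" "B \<noteq> E" using h by auto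
      then have "\<psi> A \<noteq> \<psi> E" "\<psi> B \<noteq> \<psi> E" using Q6 h(1,2) ET unfolding inj_on_def by metis+
      have "\<psi> A \<union> \<psi> B \<noteq> \<psi> E"
      proof
        assume eq: "\<psi> A \<union> \<psi> B = \<psi> E"
        from \<open>\<psi> A \<subseteq> \<psi> B \<or> \<psi> B \<subseteq> \<psi> A \<or> \<psi> A \<inter> \<psi> B = {}\<close>
        show False
        proof (elim disjE)
          assume "\<psi> A \<subseteq> \<psi> B" then show False using eq \<open>\<psi> B \<noteq> \<psi> E\<close> by (simp add: Un_absorb1)
        next
          assume "\<psi> B \<subseteq> \<psi> A" then show False using eq \<open>\<psi> A \<noteq> \<psi> E\<close> by (simp add: Un_absorb2)
        next
          assume "\<psi> A \<inter> \<psi> B = {}" then show False using \<open>j \<in> \<psi> A\<close> \<open>j \<in> \<psi> B\<close> by blast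
        qed
      qed
      then have "\<psi> A \<union> \<psi> B \<subset> \<psi> E" using XE by blast
      then show False using Q7[OF h(1) h(2) ET h(3-6) X] by blast
    qed
    have "j \<in> A \<or> j \<in> B" using AB(6) DE by blast
    then show False
    proof
      assume "j \<in> A"
      then show False using key[of B A] AB by (simp add: Int_commute Un_commute)
    next
      assume "j \<in> B"
      then show False using key[of A B] AB by simp
    qed
  qed
  have part2: "C \<inter> J \<in> T'" if CT: "C \<in> T" and CJ: "C \<inter> J \<noteq> {}" for C
  proof (rule ccontr)
    assume nin: "C \<inter> J \<notin> T'"
    define E where "E = lca T' (C \<inter> J)"
    have ET: "E \<in> T'" unfolding E_def using lca_in[OF finJ trJ CJ] by blast
    have DE: "C \<inter> J \<subseteq> E" unfolding E_def by (rule lca_sup)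
    have minE: "\<And>X. X \<in> T' \<Longrightarrow> C \<inter> J \<subseteq> X \<Longrightarrow> E \<subseteq> X" unfolding E_def by (rule lca_min)
    have neq: "E \<noteq> C \<inter> J" using ET nin by blast
    have "\<not> is_singleton E"
    proof
      assume "is_singleton E"
      then obtain x where "E = {x}" by (auto simp: is_singleton_def)
      then show False using DE neq CJ by auto
    qed
    then obtain A B where AB: "A \<in> T'" "B \<in> T'" "A \<noteq> {}" "B \<noteq> {}" "A \<inter> B = {}" "A \<union> B = E"
      using tree_split[OF trJ ET] by blast
    have "\<not> C \<inter> J \<subseteq> A"
    proof
      assume "C \<inter> J \<subseteq> A" then have "E \<subseteq> A" using minE AB(1) by blast
      then show False using AB by blast
    qed
    then obtain b where b: "b \<in> C \<inter> J" "b \<in> B" "b \<notin> A" using DE AB(6) by blast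
    have "\<not> C \<inter> J \<subseteq> B"
    proof
      assume "C \<inter> J \<subseteq> B" then have "E \<subseteq> B" using minE AB(2) by blast
      then show False using AB by blast
    qed
    then obtain a where a: "a \<in> C \<inter> J" "a \<in> A" "a \<notin> B" using DE AB(6) by blast
    have inC: "\<psi> X \<subseteq> C" if h: "X \<in> T'" "x \<in> C \<inter> J" "x \<in> X" "y \<in> C \<inter> J" "y \<notin> X" for X x y
    proof -
      have "x \<in> \<psi> X" using sub[OF h(1) h(3)] .
      moreover have "\<psi> X \<subseteq> C \<or> C \<subseteq> \<psi> X \<or> \<psi> X \<inter> C = {}" using tree_lam[OF tr Q1[OF h(1)] CT] .
      moreover have "\<not> C \<subseteq> \<psi> X" using part1[OF h(1)] h(4,5) by blast
      ultimately show ?thesis using h(2) by blast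
    qed
    have AC: "\<psi> A \<subseteq> C" using inC[OF AB(1) a(1) a(2) b(1) b(3)] .
    have BC: "\<psi> B \<subseteq> C" using inC[OF AB(2) b(1) b(2) a(1) a(3)] .
    have "a \<in> \<psi> E" using sub[OF ET] DE a(1) by blast
    moreover have "\<psi> E \<subseteq> C \<or> C \<subseteq> \<psi> E \<or> \<psi> E \<inter> C = {}" using tree_lam[OF tr Q1[OF ET] CT] .
    moreover have "\<not> \<psi> E \<subseteq> C" using part1[OF ET] DE neq by blast
    moreover have "\<psi> E \<noteq> C" using part1[OF ET] neq by blast
    ultimately have "C \<subset> \<psi> E" using a(1) by blast
    then show False using Q7[OF AB(1,2) ET AB(3-6) CT _ AC BC] by blast
  qed
  show ?thesis
  proof
    show "T' \<subseteq> restr J T"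
    proof
      fix D assume DT: "D \<in> T'"
      then have "D = \<psi> D \<inter> J" "\<psi> D \<in> T" "D \<noteq> {}" using part1 Q1 tree_sub[OF trJ] by auto
      then show "D \<in> restr J T" unfolding restr_def by blast
    qed
    show "restr J T \<subseteq> T'" unfolding restr_def using part2 by blast
  qed
qed

theorem lemma3p2:
  fixes I J :: "'a set" and T :: "'a set set"
  assumes "finite I" and "is_tree I T" and "J \<subseteq> I" and "J \<noteq> {}"
  shows "\<exists>!TJ. is_tree J TJ \<and> forest_le I (insert TJ (trivial_forest (I - J))) {T}"
proof (rule ex1I[where a="restr J T"])
  show "is_tree J (restr J T) \<and> forest_le I (insert (restr J T) (trivial_forest (I - J))) {T}"
    using restr_tree[OF assms] exists_le[OF assms] by blast
next
  fix TJ assume "is_tree J TJ \<and> forest_le I (insert TJ (trivial_forest (I - J))) {T}"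
  then show "TJ = restr J T" using uniq[OF assms] by blast
qed

end
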